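(* Fix $k\in\{1,\dots,K\}$ and arbitrary matrices $\mathbf{V}_1^{(i)},\dots,\mathbf{V}_G^{(i)}\in\mathbb{C}^{M\times d}$, and let $h_k^{(i)}$ be defined as in the context. Then: (C.a) For all $\mathbf{V}_1,\dots,\mathbf{V}_G\in\mathbb{C}^{M\times d}$, $$h_k^{(i)}(\{\mathbf{V}_g\})\ \ge\ -\log\det\big(\mathbf{I}_N+\mathbf{H}_k\mathbf{V}_{g_k}\mathbf{V}_{g_k}^H\mathbf{H}_k^H\mathbf{J}_k\big),$$ with equality when $\mathbf{V}_g=\mathbf{V}_g^{(i)}$ for all $g=1,\dots,G$. (C.b) At $\{\mathbf{V}_g\}=\{\mathbf{V}_g^{(i)}\}$, the partial derivatives of $h_k^{(i)}$ and of $\{\mathbf{V}_g\}\mapsto-\log\det\big(\mathbf{I}_N+\mathbf{H}_k\mathbf{V}_{g_k}\mathbf{V}_{g_k}^H\mathbf{H}_k^H\mathbf{J}_k\big)$ with respect to the real part and the imaginary part of every entry of every $\mathbf{V}_g$, $g=1,\dots,G$, coincide. Moreover $h_k^{(i)}$ is a convex quadratic function of $\{\mathbf{V}_g\}$.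
   Context: Setting: there are $G$ clusters and $K$ base stations; BS $k$ belongs to cluster $g_k\in\{1,\dots,G\}$. Integers $M>N\ge1$ are given and $d=N$. For each $k$, $\mathbf{H}_k\in\mathbb{C}^{N\times M}$ is fixed and $\sigma_k^2>0$. Variables $\mathbf{V}_g\in\mathbb{C}^{M\times d}$, $g=1,\dots,G$. Define $$\mathbf{J}_k=\Big(\sum_{g'\neq g_k}\mathbf{H}_k\mathbf{V}_{g'}\mathbf{V}_{g'}^H\mathbf{H}_k^H+\sigma_k^2\mathbf{I}_N\Big)^{-1},$$ $$\hat{\mathbf{U}}_k^{(i)}=\Big(\sum_{g=1}^G\mathbf{H}_k\mathbf{V}_g^{(i)}(\mathbf{V}_g^{(i)})^H\mathbf{H}_k^H+\sigma_k^2\mathbf{I}_N\Big)^{-1}\mathbf{H}_k\mathbf{V}_{g_k}^{(i)},\qquad \hat{\mathbf{Q}}_k^{(i)}=\mathbf{I}_d-(\hat{\mathbf{U}}_k^{(i)})^H\mathbf{H}_k\mathbf{V}_{g_k}^{(i)},$$ $$\hat{\mathbf{A}}_k^{(i)}=\mathbf{H}_k^H\hat{\mathbf{U}}_k^{(i)}(\hat{\mathbf{Q}}_k^{(i)})^{-1}(\hat{\mathbf{U}}_k^{(i)})^H\mathbf{H}_k,\qquad \hat{\mathbf{B}}_k^{(i)}=-(\hat{\mathbf{Q}}_k^{(i)})^{-1}(\hat{\mathbf{U}}_k^{(i)})^H\mathbf{H}_k,$$ $$\hat b_k^{(i)}=\mathrm{Tr}\Big((\hat{\mathbf{Q}}_k^{(i)})^{-1}\big(\mathbf{I}_d+\sigma_k^2(\hat{\mathbf{U}}_k^{(i)})^H\hat{\mathbf{U}}_k^{(i)}\big)\Big)+\log\det\hat{\mathbf{Q}}_k^{(i)}-d,$$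 $$h_k^{(i)}(\{\mathbf{V}_g\})=\sum_{g=1}^G\mathrm{Tr}\big(\mathbf{V}_g^H\hat{\mathbf{A}}_k^{(i)}\mathbf{V}_g\big)+2\,\Re\{\mathrm{Tr}(\hat{\mathbf{B}}_k^{(i)}\mathbf{V}_{g_k})\}+\hat b_k^{(i)}.$$ Here $\log$ is the natural logarithm. *)

theory Defs
  imports "HOL-Analysis.Analysis"
begin

text \<open>Complex matrices are rendered as \<open>complex^'c^'r\<close> (r rows, c columns).
 Index types: 'n has N elements (also d = N), 'm has M elements.\<close>

definition cH :: "complex^'c^'r \<Rightarrow> complex^'r^'c" where
  "cH A = (\<chi> i j. cnj (A $ j $ i))"

definition Jmat :: "complex^'m^'n \<Rightarrow> real \<Rightarrow> 'g::finite \<Rightarrow> ('g \<Rightarrow> complex^'n^'m) \<Rightarrow> complex^'n^'n" where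
  "Jmat Hk s2 gk V = matrix_inv
     ((\<Sum>g\<in>{g. g \<noteq> gk}. Hk ** V g ** cH (V g) ** cH Hk) + s2 *\<^sub>R mat 1)"

definition Uhat :: "complex^'m^'n \<Rightarrow> real \<Rightarrow> 'g::finite \<Rightarrow> ('g \<Rightarrow> complex^'n^'m) \<Rightarrow> complex^'n^'n" where
  "Uhat Hk s2 gk Vi = matrix_inv
     ((\<Sum>g\<in>UNIV. Hk ** Vi g ** cH (Vi g) ** cH Hk) + s2 *\<^sub>R mat 1) ** (Hk ** Vi gk)"

definition Qhat :: "complex^'m^'n \<Rightarrow> real \<Rightarrow> 'g::finite \<Rightarrow> ('g \<Rightarrow> complex^'n^'m) \<Rightarrow> complex^'n^'n" where
  "Qhat Hk s2 gk Vi = mat 1 - cH (Uhat Hk s2 gk Vi) ** Hk ** Vi gk"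

definition Ahat :: "complex^'m^'n \<Rightarrow> real \<Rightarrow> 'g::finite \<Rightarrow> ('g \<Rightarrow> complex^'n^'m) \<Rightarrow> complex^'m^'m" where
  "Ahat Hk s2 gk Vi = cH Hk ** Uhat Hk s2 gk Vi ** matrix_inv (Qhat Hk s2 gk Vi)
      ** cH (Uhat Hk s2 gk Vi) ** Hk"

definition Bhat :: "complex^'m^'n \<Rightarrow> real \<Rightarrow> 'g::finite \<Rightarrow> ('g \<Rightarrow> complex^'n^'m) \<Rightarrow> complex^'m^'n" where
  "Bhat Hk s2 gk Vi = - (matrix_inv (Qhat Hk s2 gk Vi) ** cH (Uhat Hk s2 gk Vi) ** Hk)"

text \<open>The constant term; its trace and determinant are real (Q is Hermitian positive
 definite), so we take real parts.\<close>
definition bhat :: "complex^'m^'n \<Rightarrow> real \<Rightarrow> 'g::finite \<Rightarrow> ('g \<Rightarrow> complex^'n^'m) \<Rightarrow> real" where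
  "bhat Hk s2 gk Vi = Re (trace (matrix_inv (Qhat Hk s2 gk Vi) **
        (mat 1 + s2 *\<^sub>R (cH (Uhat Hk s2 gk Vi) ** Uhat Hk s2 gk Vi))))
     + ln (Re (det (Qhat Hk s2 gk Vi))) - real CARD('n)"

text \<open>The surrogate h_k^(i); Tr(V^H A V) is real (A Hermitian), so Re is harmless.\<close>
definition hsur :: "complex^'m^'n \<Rightarrow> real \<Rightarrow> 'g::finite \<Rightarrow> ('g \<Rightarrow> complex^'n^'m)
    \<Rightarrow> ('g \<Rightarrow> complex^'n^'m) \<Rightarrow> real" where
  "hsur Hk s2 gk Vi V = (\<Sum>g\<in>UNIV. Re (trace (cH (V g) ** Ahat Hk s2 gk Vi ** V g)))
     + 2 * Re (trace (Bhat Hk s2 gk Vi ** V gk)) + bhat Hk s2 gk Vi"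

text \<open>-log det(I + H V_{g_k} V_{g_k}^H H^H J_k); the determinant is real positive.\<close>
definition negrate :: "complex^'m^'n \<Rightarrow> real \<Rightarrow> 'g::finite \<Rightarrow> ('g \<Rightarrow> complex^'n^'m) \<Rightarrow> real" where
  "negrate Hk s2 gk V = - ln (Re (det (mat 1 + Hk ** V gk ** cH (V gk) ** cH Hk ** Jmat Hk s2 gk V)))"

definition perturb :: "('g \<Rightarrow> complex^'n^'m) \<Rightarrow> 'g \<Rightarrow> 'm \<Rightarrow> 'n \<Rightarrow> complex \<Rightarrow> ('g \<Rightarrow> complex^'n^'m)" where
  "perturb V g a b z = V(g := V g + (\<chi> i j. if i = a \<and> j = b then z else 0))"

end

theory Submission
  imports Defs "HOL-Computational_Algebra.Fundamental_Theorem_Algebra"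
begin


lemma cH_comp [simp]: "cH A $ i $ j = cnj (A $ j $ i)"
  by (simp add: cH_def)

lemma cH_cH [simp]: "cH (cH A) = A"
  by (simp add: vec_eq_iff)

lemma cH_mult: "cH (A ** B) = cH B ** cH (A::complex^'n^'m)"
  by (simp add: vec_eq_iff matrix_matrix_mult_def cnj_sum mult.commute)

lemma cH_add: "cH (A + B) = cH A + cH B"
  by (simp add: vec_eq_iff)

lemma cH_diff: "cH (A - B) = cH A - cH B"
  by (simp add: vec_eq_iff)

lemma cH_minus: "cH (- A) = - cH A"
  by (simp add: vec_eq_iff)

lemma cH_scaleR: "cH (r *\<^sub>R A) = r *\<^sub>R cH A"
  by (simp add: vec_eq_iff)

lemma cH_zero [simp]: "cH 0 = 0"
  by (simp add: vec_eq_iff)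

lemma cH_mat [simp]: "cH (mat 1) = mat 1"
  by (simp add: vec_eq_iff mat_def)

lemma cH_sum: "finite S \<Longrightarrow> cH (\<Sum>g\<in>S. f g) = (\<Sum>g\<in>S. cH (f g))"
  by (induction S rule: finite_induct) (auto simp: cH_add)

lemma trace_cH: "trace (cH A) = cnj (trace A)"
  by (simp add: trace_def cnj_sum)

lemma trace_scaleR: "trace (r *\<^sub>R (A::complex^'n^'n)) = r *\<^sub>R trace A"
  by (simp add: trace_def scaleR_sum_right)

lemma trace_minus: "trace (- (A::complex^'n^'n)) = - trace A"
  by (simp add: trace_def sum_negf)

lemma trace_sum: "finite S \<Longrightarrow> trace (\<Sum>g\<in>S. f g) = (\<Sum>g\<in>S. trace (f g :: complex^'n^'n))"
  by (induction S rule: finite_induct) (auto simp: trace_add trace_0[unfolded mat_0])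

lemma matrix_add_rdistrib': "((B + C) ** A) = (B ** A) + (C ** (A::'a::semiring_1^_^_))"
  by (vector matrix_matrix_mult_def sum.distrib[symmetric] field_simps)

lemma matrix_diff_ldistrib: "(A ** (B - C)) = (A ** B) - (A ** (C::'a::ring_1^_^_))"
  by (vector matrix_matrix_mult_def sum_subtractf[symmetric] field_simps)

lemma matrix_diff_rdistrib: "((B - C) ** A) = (B ** A) - (C ** (A::'a::ring_1^_^_))"
  by (vector matrix_matrix_mult_def sum_subtractf[symmetric] field_simps)

lemma matrix_neg_left: "(- B) ** A = - (B ** (A::'a::ring_1^_^_))"
  by (vector matrix_matrix_mult_def sum_negf[symmetric])

lemma matrix_neg_right: "A ** (- B) = - (A ** (B::'a::ring_1^_^_))"
  by (vector matrix_matrix_mult_def sum_negf[symmetric])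

lemma matrix_sum_left: "finite S \<Longrightarrow> (\<Sum>g\<in>S. f g) ** A = (\<Sum>g\<in>S. f g ** (A::'a::semiring_1^_^_))"
  by (induction S rule: finite_induct) (auto simp: matrix_add_rdistrib')

lemma matrix_sum_right: "finite S \<Longrightarrow> A ** (\<Sum>g\<in>S. f g) = (\<Sum>g\<in>S. A ** (f g::'a::semiring_1^_^_))"
  by (induction S rule: finite_induct) (auto simp: matrix_add_ldistrib)

lemma matrix_scaleR_left: "(r *\<^sub>R A) ** B = r *\<^sub>R (A ** (B::complex^_^_))"
  by (simp add: scalar_matrix_assoc)

lemma matrix_scaleR_right: "A ** (r *\<^sub>R B) = r *\<^sub>R (A ** (B::complex^_^_))"
  by (simp add: matrix_scalar_ac scalar_matrix_assoc)

lemma mat1_scaleR_left: "(r *\<^sub>R mat 1) ** A = r *\<^sub>R (A::complex^_^_)"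
  by (simp add: matrix_scaleR_left)

lemma mat1_scaleR_right: "A ** (r *\<^sub>R mat 1) = r *\<^sub>R (A::complex^_^_)"
  by (simp add: matrix_scaleR_right)

lemma minv: assumes "invertible (A::'a::semiring_1^'n^'m)"
  shows "A ** matrix_inv A = mat 1" "matrix_inv A ** A = mat 1"
proof -
  have "\<exists>A'. A ** A' = mat 1 \<and> A' ** A = mat 1" using assms by (simp add: invertible_def)
  then have "A ** matrix_inv A = mat 1 \<and> matrix_inv A ** A = mat 1"
    unfolding matrix_inv_def by (rule someI_ex)
  then show "A ** matrix_inv A = mat 1" "matrix_inv A ** A = mat 1" by auto
qed

lemma minv_unique: assumes "invertible (A::'a::semiring_1^'n^'n)" "A ** B = mat 1"
  shows "matrix_inv A = B"
proof -
  have "matrix_inv A = matrix_inv A ** (A ** B)" using assms by simp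
  also have "\<dots> = B" by (simp add: matrix_mul_assoc minv[OF assms(1)])
  finally show ?thesis .
qed

lemma invertible_cH: "invertible (A::complex^'n^'n) \<Longrightarrow> invertible (cH A)"
  unfolding invertible_def by (metis cH_mult cH_mat)

lemma cH_minv: assumes "invertible (A::complex^'n^'n)"
  shows "cH (matrix_inv A) = matrix_inv (cH A)"
proof -
  have "cH A ** cH (matrix_inv A) = mat 1"
    using minv(2)[OF assms] by (metis cH_mult cH_mat)
  then show ?thesis using minv_unique[OF invertible_cH[OF assms]] by simp
qed

lemma det_cH: "det (cH (A::complex^'n^'n)) = cnj (det A)"
proof -
  have "cH A = transpose (\<chi> i j. cnj (A$i$j))" by (simp add: vec_eq_iff transpose_def)
  then have "det (cH A) = det (\<chi> i j. cnj (A$i$j))" by simp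
  also have "\<dots> = cnj (det A)"
    by (simp add: det_def cnj_sum cnj_prod)
  finally show ?thesis .
qed

lemma invertible_mult': "invertible (A::complex^'n^'n) \<Longrightarrow> invertible B \<Longrightarrow> invertible (A ** B)"
  by (rule invertible_mult)

lemma mat_mulv: "mat c *v x = c *s (x::'a::semiring_1^'n)"
  by (simp add: vec_eq_iff matrix_vector_mult_def mat_def if_distrib if_distribR cong: if_cong)

lemma mulv_scale: "A *v (c *s x) = c *s (A *v (x::'a::comm_semiring_1^'n))"
  by (simp add: vec_eq_iff matrix_vector_mult_def sum_distrib_left mult_ac)

lemma mulv_add_left: "(A + B) *v x = A *v x + B *v (x::'a::semiring_1^'n)"
  by (simp add: vec_eq_iff matrix_vector_mult_def sum.distrib distrib_right)

lemma mulv_diff_left: "(A - B) *v x = A *v x - B *v (x::'a::ring_1^'n)"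
  by (simp add: vec_eq_iff matrix_vector_mult_def sum_subtractf left_diff_distrib)

lemma mulv_diff_right: "A *v (x - y) = A *v x - A *v (y::'a::ring_1^'n)"
  by (simp add: vec_eq_iff matrix_vector_mult_def sum_subtractf right_diff_distrib)

lemma mulv_add_right: "A *v (x + y) = A *v x + A *v (y::'a::semiring_1^'n)"
  by (simp add: vec_eq_iff matrix_vector_mult_def sum.distrib distrib_left)

lemma mulv_scaleR_left: "(r *\<^sub>R A) *v x = r *\<^sub>R (A *v (x::complex^'n))"
  by (simp add: vec_eq_iff matrix_vector_mult_def scaleR_sum_right)

definition ip :: "complex^'n \<Rightarrow> complex^'n \<Rightarrow> complex" where
  "ip x y = (\<Sum>i\<in>UNIV. cnj (x$i) * y$i)"

lemma ip_adj: "ip x (A *v y) = ip (cH A *v x) (y::complex^'n)"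
proof -
  have "ip x (A *v y) = (\<Sum>i\<in>UNIV. \<Sum>j\<in>UNIV. cnj (x$i) * A$i$j * y$j)"
    unfolding ip_def matrix_vector_mult_def by (simp add: sum_distrib_left mult.assoc)
  also have "\<dots> = (\<Sum>j\<in>UNIV. \<Sum>i\<in>UNIV. cnj (x$i) * A$i$j * y$j)"
    by (rule sum.swap)
  also have "\<dots> = ip (cH A *v x) y"
    unfolding ip_def matrix_vector_mult_def
    by (simp add: sum_distrib_left sum_distrib_right cnj_sum mult.commute mult.left_commute)
  finally show ?thesis .
qed

lemma ip_swap: "ip y x = cnj (ip x y)"
  by (simp add: ip_def cnj_sum mult.commute)

lemma ip_self: "ip x x = of_real (\<Sum>i\<in>UNIV. (cmod (x$i))\<^sup>2)"
  unfolding ip_def of_real_sum by (rule sum.cong, simp, subst complex_norm_square, rule mult.commute)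

lemma ip_self_pos: "x \<noteq> 0 \<Longrightarrow> Re (ip x x) > 0"
proof -
  assume "x \<noteq> 0"
  then obtain i where i: "x$i \<noteq> 0" by (auto simp: vec_eq_iff)
  have "(cmod (x$i))\<^sup>2 \<le> (\<Sum>i\<in>UNIV. (cmod (x$i))\<^sup>2)"
    by (rule member_le_sum) auto
  moreover have "(cmod (x$i))\<^sup>2 > 0" using i by simp
  moreover have "Re (ip x x) = (\<Sum>i\<in>UNIV. (cmod (x$i))\<^sup>2)" by (simp add: ip_self)
  ultimately show ?thesis by linarith
qed

lemma ip_self_nonneg: "Re (ip x x) \<ge> 0"
  by (simp add: ip_self sum_nonneg)

lemma ip_add2: "ip x (y + z) = ip x y + ip x z"
  by (simp add: ip_def distrib_left sum.distrib)
lemma ip_diff2: "ip x (y - z) = ip x y - ip x z"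
  by (simp add: ip_def right_diff_distrib sum_subtractf)
lemma ip_scale2: "ip x (c *s y) = c * ip x y"
  by (simp add: ip_def sum_distrib_left mult_ac)
lemma ip_add1: "ip (x + y) z = ip x z + ip y z"
  by (simp add: ip_def distrib_right sum.distrib)
lemma ip_diff1: "ip (x - y) z = ip x z - ip y z"
  by (simp add: ip_def left_diff_distrib sum_subtractf)
lemma ip_scale1: "ip (c *s x) y = cnj c * ip x y"
  by (simp add: ip_def sum_distrib_left mult_ac)
lemma ip_zero1 [simp]: "ip 0 y = 0" by (simp add: ip_def)
lemma ip_zero2 [simp]: "ip x 0 = 0" by (simp add: ip_def)

definition herm :: "complex^'n^'n \<Rightarrow> bool" where "herm A \<longleftrightarrow> cH A = A"
definition pd :: "complex^'n^'n \<Rightarrow> bool" where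
  "pd A \<longleftrightarrow> herm A \<and> (\<forall>x. x \<noteq> 0 \<longrightarrow> Re (ip x (A *v x)) > 0)"
definition psd :: "complex^'n^'n \<Rightarrow> bool" where
  "psd A \<longleftrightarrow> herm A \<and> (\<forall>x. Re (ip x (A *v x)) \<ge> 0)"

lemma herm_ip_real: assumes "herm A" shows "ip x (A *v x) = of_real (Re (ip x (A *v x)))"
proof -
  have "ip x (A *v x) = cnj (ip x (A *v x))"
    by (metis assms herm_def ip_adj ip_swap)
  then show ?thesis by (metis Reals_cnj_iff complex_is_Real_iff of_real_Re)
qed

lemma pd_psd: "pd A \<Longrightarrow> psd A"
  unfolding pd_def psd_def by (metis ip_zero1 less_eq_real_def mulv_scale vector_smult_lzero zero_complex.simps(1))

lemma psd_add_pd: "psd A \<Longrightarrow> pd B \<Longrightarrow> pd (A + B)"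
  unfolding pd_def psd_def herm_def by (auto simp: cH_add mulv_add_left ip_add2 add_nonneg_pos)

lemma pd_add_psd: "pd A \<Longrightarrow> psd B \<Longrightarrow> pd (A + B)"
  using psd_add_pd by (metis add.commute)

lemma psd_add: "psd A \<Longrightarrow> psd B \<Longrightarrow> psd (A + B)"
  unfolding psd_def herm_def by (auto simp: cH_add mulv_add_left ip_add2)

lemma psd_zero: "psd 0"
  unfolding psd_def herm_def by (simp add: ip_def matrix_vector_mult_def)

lemma psd_sum: "finite S \<Longrightarrow> (\<And>g. g \<in> S \<Longrightarrow> psd (f g)) \<Longrightarrow> psd (\<Sum>g\<in>S. f g)"
  by (induction S rule: finite_induct) (auto intro: psd_add psd_zero)

lemma ip_scaleR2: "ip x (r *\<^sub>R y) = r *\<^sub>R ip x y"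
  by (simp add: ip_def scaleR_sum_right)

lemma pd_scaled_id: "s > 0 \<Longrightarrow> pd (s *\<^sub>R mat 1 :: complex^'n^'n)"
  unfolding pd_def herm_def
  by (auto simp: cH_scaleR mulv_scaleR_left ip_scaleR2 ip_self_pos)

lemma psd_gram: "psd (Y ** cH (Y::complex^'m^'n))"
proof -
  have "ip x ((Y ** cH Y) *v x) = ip (cH Y *v x) (cH Y *v x)" for x
    by (simp add: matrix_vector_mul_assoc[symmetric] ip_adj)
  then show ?thesis unfolding psd_def herm_def by (simp add: cH_mult ip_self_nonneg)
qed



definition cpoly :: "complex^'n^'n \<Rightarrow> complex poly" where
 "cpoly A = (\<Sum>p\<in>{p. p permutes (UNIV::'n set)}. of_int (sign p) *
     (\<Prod>i\<in>UNIV. if p i = i then [:A$i$i, 1:] else [:A$i$(p i):]))"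

lemma poly_cpoly: "poly (cpoly A) t = det (A + mat t)"
  unfolding cpoly_def det_def
  by (auto simp: poly_sum poly_prod mat_def intro!: sum.cong prod.cong arg_cong2[where f="(*)"])

lemma fixcard:
  assumes p: "p permutes (UNIV::'n::finite set)" and pid: "p \<noteq> id"
  shows "card {i. p i = i} + 2 \<le> CARD('n)"
proof -
  obtain i where i: "p i \<noteq> i" using pid by (auto simp: fun_eq_iff)
  have inj: "inj p" using p by (rule permutes_inj)
  have pj: "p (p i) \<noteq> p i" using i inj by (metis injD)
  have sub: "{i, p i} \<subseteq> - {i. p i = i}" using i pj by auto
  have "card {i, p i} = 2" using i by auto
  then have "2 \<le> card (- {i. p i = i})" using card_mono[OF _ sub] by simp
  moreover have "card {i. p i = i} + card (- {i. p i = i}) = CARD('n)"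
    using card_Un_disjoint[of "{i. p i = i}" "- {i. p i = i}"] by (simp add: Compl_partition)
  ultimately show ?thesis by linarith
qed

lemma deg_term:
  fixes A :: "complex^'n^'n"
  shows "degree (of_int (sign p) * (\<Prod>i\<in>UNIV. if p i = i then [:A$i$i, 1:] else [:A$i$(p i):]))
     \<le> card {i. p i = i}"
proof -
  have "degree (\<Prod>i\<in>UNIV. if p i = i then [:A$i$i, 1:] else [:A$i$(p i):])
      \<le> (\<Sum>i\<in>UNIV. degree (if p i = i then [:A$i$i, 1:] else [:A$i$(p i):]))"
    using degree_prod_sum_le[of UNIV "\<lambda>i. if p i = i then [:A$i$i, 1:] else [:A$i$(p i):]"] by (simp add: o_def)
  also have "\<dots> = (\<Sum>i\<in>UNIV. if p i = i then 1 else 0)"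
    by (rule sum.cong) auto
  also have "\<dots> = card {i. p i = i}"
    by (simp add: sum.If_cases)
  finally have "degree (\<Prod>i\<in>UNIV. if p i = i then [:A$i$i, 1:] else [:A$i$(p i):]) \<le> card {i. p i = i}" .
  moreover have "degree (of_int (sign p) * (\<Prod>i\<in>UNIV. if p i = i then [:A$i$i, 1:] else [:A$i$(p i):]))
     \<le> degree (of_int (sign p) :: complex poly) + degree (\<Prod>i\<in>UNIV. if p i = i then [:A$i$i, 1:] else [:A$i$(p i):])"
    by (rule degree_mult_le)
  ultimately show ?thesis by simp
qed

lemma list_coeffs:
  fixes as :: "complex list"
  defines "P \<equiv> prod_list (map (\<lambda>a. [:a,1:]) as)"
  shows "degree P = length as \<and> coeff P (length as) = 1 \<and>
     (as \<noteq> [] \<longrightarrow> coeff P (length as - 1) = sum_list as)"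
  unfolding P_def
proof (induction as)
  case Nil
  then show ?case by simp
next
  case (Cons a as)
  define Q where "Q = prod_list (map (\<lambda>a. [:a,1:]) as)"
  have eq: "prod_list (map (\<lambda>a. [:a,1:]) (a # as)) = smult a Q + pCons 0 Q"
    by (simp add: Q_def)
  have IH: "degree Q = length as" "coeff Q (length as) = 1"
    "as \<noteq> [] \<Longrightarrow> coeff Q (length as - 1) = sum_list as"
    using Cons by (auto simp: Q_def)
  have Qnz: "Q \<noteq> 0" using IH(2) by auto
  have deg: "degree (smult a Q + pCons 0 Q) = Suc (length as)"
  proof -
    have "degree (pCons 0 Q) = Suc (degree Q)" using Qnz by simp
    moreover have "degree (smult a Q) < degree (pCons 0 Q)"
      using degree_smult_le[of a Q] Qnz by simp
    ultimately show ?thesis using IH(1) by (simp add: degree_add_eq_right)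
  qed
  have c1: "coeff (smult a Q + pCons 0 Q) (Suc (length as)) = 1"
    using IH by (simp add: coeff_eq_0)
  have c2: "coeff (smult a Q + pCons 0 Q) (length as) = a + sum_list as"
  proof (cases as)
    case Nil
    then show ?thesis by (simp add: Q_def)
  next
    case (Cons b bs)
    then have "length as = Suc (length as - 1)" by simp
    then have "coeff (pCons 0 Q) (length as) = coeff Q (length as - 1)"
      by (metis coeff_pCons_Suc)
    then show ?thesis using IH Cons by simp
  qed
  show ?case using eq deg c1 c2 by simp
qed

lemma monic_factor:
  fixes p :: "complex poly"
  assumes "coeff p (degree p) = 1"
  shows "\<exists>rs. length rs = degree p \<and> p = prod_list (map (\<lambda>r. [:-r,1:]) rs)"
  using assms
proof (induction "degree p" arbitrary: p)
  case 0
  then have "p = [:1:]" using degree_0_id[of p] by (metis one_pCons)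
  then show ?case using 0 by (intro exI[of _ "[]"]) simp
next
  case (Suc n)
  then have "\<not> constant (poly p)" by (simp add: constant_degree)
  then obtain r where r: "poly p r = 0" using fundamental_theorem_of_algebra by blast
  then obtain q where q: "p = [:-r,1:] * q" using poly_eq_0_iff_dvd by (metis dvdE)
  have qnz: "q \<noteq> 0" using q Suc(2) by auto
  have "degree p = degree [:-r,1:] + degree q" unfolding q by (rule degree_mult_eq) (simp_all add: qnz)
  then have dq: "degree p = Suc (degree q)" by simp
  have "lead_coeff p = lead_coeff [:-r,1:] * lead_coeff q" unfolding q by (rule lead_coeff_mult)
  then have lq: "coeff q (degree q) = 1" using Suc(3) by simp
  from Suc(1)[of q] dq Suc(2) lq obtain rs where "length rs = degree q" "q = prod_list (map (\<lambda>r. [:-r,1:]) rs)"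
    by auto
  then show ?case using q dq by (intro exI[of _ "r # rs"]) simp
qed

lemma cpoly_props:
  fixes A :: "complex^'n^'n"
  shows "degree (cpoly A) = CARD('n) \<and> coeff (cpoly A) (CARD('n)) = 1
    \<and> coeff (cpoly A) (CARD('n) - 1) = trace A"
proof -
  define n where "n = CARD('n)"
  have npos: "n > 0" unfolding n_def by simp
  define T where "T = (\<lambda>p. of_int (sign p) *
     (\<Prod>i\<in>UNIV. if p i = i then [:A$i$i, 1:] else [:A$i$(p i):]) :: complex poly)"
  define S where "S = {p. p permutes (UNIV::'n set)}"
  have fin: "finite S" unfolding S_def by (rule finite_permutations) simp
  have idS: "id \<in> S" unfolding S_def by (simp add: permutes_id)
  have cp: "cpoly A = T id + (\<Sum>p\<in>S - {id}. T p)"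
    unfolding cpoly_def T_def[symmetric] S_def[symmetric] using sum.remove[OF fin idS] by simp
  obtain xs where xs: "set xs = (UNIV::'n set)" "distinct xs"
    using finite_distinct_list[of "UNIV::'n set"] by auto
  define as where "as = map (\<lambda>i. A$i$i) xs"
  have las: "length as = n" unfolding as_def n_def using distinct_card[OF xs(2)] xs(1) by simp
  have Tid: "T id = prod_list (map (\<lambda>a. [:a,1:]) as)"
  proof -
    have "T id = (\<Prod>i\<in>set xs. [:A$i$i, 1:])" unfolding T_def xs(1) by simp
    also have "\<dots> = prod_list (map (\<lambda>i. [:A$i$i, 1:]) xs)"
      by (rule prod.distinct_set_conv_list[OF xs(2)])
    finally show ?thesis unfolding as_def by (simp add: o_def)
  qed
  have tr: "trace A = sum_list as"
  proof -
    have "trace A = (\<Sum>i\<in>set xs. A$i$i)" unfolding trace_def xs(1) ..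
    also have "\<dots> = sum_list as" unfolding as_def by (rule sum.distinct_set_conv_list[OF xs(2)])
    finally show ?thesis .
  qed
  have asne: "as \<noteq> []" using las npos by auto
  have L: "degree (T id) = n" "coeff (T id) n = 1" "coeff (T id) (n - 1) = trace A"
    using list_coeffs[of as] las asne tr Tid by auto
  have R0: "coeff (\<Sum>p\<in>S - {id}. T p) k = 0" if k: "n \<le> k + 1" for k
  proof -
    have "coeff (T p) k = 0" if p: "p \<in> S - {id}" for p
    proof -
      have "card {i. p i = i} + 2 \<le> n" using fixcard[of p] p unfolding S_def n_def by auto
      moreover have "degree (T p) \<le> card {i. p i = i}" unfolding T_def by (rule deg_term)
      ultimately have "degree (T p) < k" using k by linarith
      then show ?thesis by (simp add: coeff_eq_0)
    qed
    then show ?thesis by (simp add: coeff_sum)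
  qed
  have c1: "coeff (cpoly A) n = 1" using L R0[of n] by (simp add: cp)
  have c2: "coeff (cpoly A) (n - 1) = trace A" using L R0[of "n - 1"] npos by (simp add: cp)
  have "degree (cpoly A) \<le> n"
  proof (rule degree_le, intro allI impI)
    fix i assume "n < i"
    then show "coeff (cpoly A) i = 0" using L R0[of i] by (simp add: cp coeff_eq_0)
  qed
  moreover have "n \<le> degree (cpoly A)" using c1 by (simp add: le_degree)
  ultimately show ?thesis using c1 c2 unfolding n_def by simp
qed

lemma poly_prod_list': "poly (prod_list ps) x = prod_list (map (\<lambda>p. poly p x) ps)"
  by (induction ps) auto

lemma sing_vec:
  fixes M :: "complex^'n^'n"
  assumes "det M = 0" shows "\<exists>x. x \<noteq> 0 \<and> M *v x = 0"
proof -
  have "\<not> inj ((*v) M)"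
    using det_nz_iff_inj_gen[OF matrix_vector_mul_linear_gen, of M] assms by simp
  then obtain x y where "M *v x = M *v y" "x \<noteq> y" unfolding inj_def by blast
  then show ?thesis by (intro exI[of _ "x - y"]) (simp add: mulv_diff_right)
qed

lemma SL:
  fixes A :: "complex^'n^'n"
  obtains as where "length as = CARD('n)"
    "\<And>t. det (A + mat t) = prod_list (map (\<lambda>a. a + t) as)"
    "trace A = sum_list as"
    "\<And>a. a \<in> set as \<Longrightarrow> \<exists>x. x \<noteq> 0 \<and> A *v x = a *s x"
proof -
  have cp: "degree (cpoly A) = CARD('n)" "coeff (cpoly A) (CARD('n)) = 1"
    "coeff (cpoly A) (CARD('n) - 1) = trace A"
    using cpoly_props[of A] by auto
  obtain rs where rs: "length rs = CARD('n)" "cpoly A = prod_list (map (\<lambda>r. [:-r,1:]) rs)"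
    using monic_factor[of "cpoly A"] cp by auto
  define as where "as = map uminus rs"
  have cpa: "cpoly A = prod_list (map (\<lambda>a. [:a,1:]) as)"
    unfolding as_def rs(2) by (simp add: o_def)
  have las: "length as = CARD('n)" using rs(1) by (simp add: as_def)
  have det: "det (A + mat t) = prod_list (map (\<lambda>a. a + t) as)" for t
    unfolding poly_cpoly[symmetric] cpa poly_prod_list' by (simp add: o_def add.commute)
  have "as \<noteq> []" using las by auto
  then have tr: "trace A = sum_list as"
    using list_coeffs[of as] cpa cp las by simp
  have ev: "\<exists>x. x \<noteq> 0 \<and> A *v x = a *s x" if a: "a \<in> set as" for a
  proof -
    have "det (A + mat (-a)) = 0" unfolding det using a
      by (auto simp: prod_list_zero_iff)
    then obtain x where x: "x \<noteq> 0" "(A + mat (-a)) *v x = 0" using sing_vec by blast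
    then have "A *v x + (-a) *s x = 0" by (simp add: mulv_add_left mat_mulv)
    then have "A *v x = a *s x" by (simp add: vec_eq_iff algebra_simps)
    then show ?thesis using x by blast
  qed
  show ?thesis using that las det tr ev by blast
qed



lemma ER:
  assumes hP: "herm P" and hQ: "herm Q" and x: "x \<noteq> 0" and q: "Re (ip x (Q *v x)) > 0"
    and eq: "P *v x = \<mu> *s (Q *v x)"
  shows "\<mu> = of_real (Re (ip x (P *v x)) / Re (ip x (Q *v x)))"
proof -
  have "ip x (P *v x) = \<mu> * ip x (Q *v x)" using eq by (simp add: ip_scale2)
  moreover have "ip x (P *v x) = of_real (Re (ip x (P *v x)))" by (rule herm_ip_real[OF hP])
  moreover have "ip x (Q *v x) = of_real (Re (ip x (Q *v x)))" by (rule herm_ip_real[OF hQ])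
  ultimately have "of_real (Re (ip x (P *v x))) = \<mu> * of_real (Re (ip x (Q *v x)))" by simp
  then show ?thesis using q by (simp add: field_simps)
qed

lemma prod_list_of_real: "prod_list (map (of_real::real\<Rightarrow>complex) rs) = of_real (prod_list rs)"
  by (induction rs) auto

lemma sum_list_of_real: "sum_list (map (of_real::real\<Rightarrow>complex) rs) = of_real (sum_list rs)"
  by (induction rs) auto

lemma real_list:
  assumes "\<And>a. a \<in> set as \<Longrightarrow> \<exists>r. P r \<and> a = complex_of_real r"
  shows "\<exists>rs. as = map of_real rs \<and> (\<forall>r\<in>set rs. P r)"
  using assms
proof (induction as)
  case Nil then show ?case by simp
next
  case (Cons a as)
  then obtain r where "P r" "a = of_real r" by auto
  moreover obtain rs where "as = map of_real rs" "\<forall>r\<in>set rs. P r" using Cons by auto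
  ultimately show ?case by (intro exI[of _ "r # rs"]) auto
qed

lemma prod_list_pos: "\<forall>r\<in>set rs. r > (0::real) \<Longrightarrow> prod_list rs > 0"
  by (induction rs) auto

lemma ln_prod_list: "\<forall>r\<in>set rs. r > (0::real) \<Longrightarrow> ln (prod_list rs) \<le> sum_list rs - length rs"
proof (induction rs)
  case Nil then show ?case by simp
next
  case (Cons r rs)
  then have r: "r > 0" and p: "prod_list rs > 0" using prod_list_pos by auto
  have "ln (prod_list (r # rs)) = ln r + ln (prod_list rs)" using r p by (simp add: ln_mult)
  also have "\<dots> \<le> (r - 1) + (sum_list rs - length rs)" using ln_le_minus_one[OF r] Cons by auto
  finally show ?case by simp
qed

lemma prod_list_ge1: "\<forall>r\<in>set rs. r \<ge> (0::real) \<Longrightarrow> prod_list (map (\<lambda>r. r + 1) rs) \<ge> 1"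
proof (induction rs)
  case Nil then show ?case by simp
next
  case (Cons r rs)
  then have "prod_list (map (\<lambda>r. r + 1) rs) \<ge> 1" "r + 1 \<ge> 1" by auto
  then show ?case using mult_mono[of 1 "r+1" 1 "prod_list (map (\<lambda>r. r + 1) rs)"] by simp
qed

lemma pd_det: assumes "pd A" shows "\<exists>r>0. det A = complex_of_real r"
proof -
  obtain as where as0: "length as = CARD('a)" and as: "\<And>t. det (A + mat t) = prod_list (map (\<lambda>a. a + t) as)"
    and as3: "trace A = sum_list as" and as2: "\<And>a. a \<in> set as \<Longrightarrow> \<exists>x. x \<noteq> 0 \<and> A *v x = a *s x"
    using SL[of A] by blast
  have "\<exists>r. r > 0 \<and> a = complex_of_real r" if a: "a \<in> set as" for a
  proof -
    obtain x where x: "x \<noteq> 0" "A *v x = a *s x" using as2[OF a] by blast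
    have h1: "herm (mat 1 :: complex^'a^'a)" by (simp add: herm_def)
    have q: "Re (ip x (mat 1 *v x)) > 0" using ip_self_pos[OF x(1)] by simp
    have "a = of_real (Re (ip x (A *v x)) / Re (ip x (mat 1 *v x)))"
      by (rule ER[OF _ h1 x(1) q]) (use assms x in \<open>auto simp: pd_def\<close>)
    moreover have "Re (ip x (A *v x)) > 0" using assms x(1) by (simp add: pd_def)
    ultimately show ?thesis using q by (intro exI[of _ "Re (ip x (A *v x)) / Re (ip x (mat 1 *v x))"]) auto
  qed
  then obtain rs where rs: "as = map of_real rs" "\<forall>r\<in>set rs. r > 0" using real_list by metis
  have "det A = prod_list as" using as[of 0] by simp
  then show ?thesis using rs prod_list_pos by (auto simp: prod_list_of_real)
qed

lemma pd_invertible: "pd A \<Longrightarrow> invertible A"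
  using pd_det[of A] by (auto simp: invertible_det_nz)

lemma pd_inv: assumes "pd A" shows "pd (matrix_inv A)"
proof -
  have inv: "invertible A" using pd_invertible[OF assms] .
  have hA: "cH A = A" using assms by (simp add: pd_def herm_def)
  have h: "herm (matrix_inv A)" unfolding herm_def using cH_minv[OF inv] hA by simp
  have "Re (ip x (matrix_inv A *v x)) > 0" if x: "x \<noteq> 0" for x
  proof -
    define y where "y = matrix_inv A *v x"
    have Ay: "A *v y = x" unfolding y_def by (simp add: matrix_vector_mul_assoc minv[OF inv])
    have y0: "y \<noteq> 0" using Ay x by auto
    have "ip x (matrix_inv A *v x) = ip (A *v y) y" unfolding Ay y_def[symmetric] by (rule refl)
    also have "\<dots> = ip y (A *v y)" using ip_adj[of y A y] hA by simp
    finally show ?thesis using assms y0 by (simp add: pd_def)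
  qed
  then show ?thesis using h by (simp add: pd_def)
qed

lemma herm_minv: "herm A \<Longrightarrow> invertible A \<Longrightarrow> herm (matrix_inv A)"
  by (simp add: herm_def cH_minv)

lemma det_minv: "invertible (A::complex^'n^'n) \<Longrightarrow> det (matrix_inv A) * det A = 1"
  by (metis det_I det_mul minv(2))

lemma F1:
  fixes Q E :: "complex^'n^'n"
  assumes Q: "pd Q" and E: "pd E"
  shows "ln (Re (det E)) \<le> Re (trace (matrix_inv Q ** E)) + ln (Re (det Q)) - real CARD('n)"
proof -
  define M where "M = matrix_inv Q ** E"
  have invQ: "invertible Q" using pd_invertible[OF Q] .
  obtain as where as: "length as = CARD('n)" "\<And>t. det (M + mat t) = prod_list (map (\<lambda>a. a + t) as)"
    "trace M = sum_list as" "\<And>a. a \<in> set as \<Longrightarrow> \<exists>x. x \<noteq> 0 \<and> M *v x = a *s x"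
    using SL[of M] by blast
  have "\<exists>r. r > 0 \<and> a = complex_of_real r" if a: "a \<in> set as" for a
  proof -
    obtain x where x: "x \<noteq> 0" "M *v x = a *s x" using as(4)[OF a] by blast
    have "E *v x = Q *v (M *v x)"
      by (simp add: M_def matrix_vector_mul_assoc matrix_mul_assoc minv[OF invQ])
    then have eq: "E *v x = a *s (Q *v x)" using x(2) by (simp add: mulv_scale)
    have q: "Re (ip x (Q *v x)) > 0" using Q x(1) by (simp add: pd_def)
    have "a = of_real (Re (ip x (E *v x)) / Re (ip x (Q *v x)))"
      by (rule ER[OF _ _ x(1) q eq]) (use Q E in \<open>auto simp: pd_def\<close>)
    moreover have "Re (ip x (E *v x)) > 0" using E x(1) by (simp add: pd_def)
    ultimately show ?thesis using q by (intro exI[of _ "Re (ip x (E *v x)) / Re (ip x (Q *v x))"]) auto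
  qed
  then obtain rs where rs: "as = map of_real rs" "\<forall>r\<in>set rs. r > 0" using real_list by metis
  have dM: "det M = of_real (prod_list rs)" using as(2)[of 0] rs(1) by (simp add: prod_list_of_real)
  have tM: "trace M = of_real (sum_list rs)" using as(3) rs(1) by (simp add: sum_list_of_real)
  obtain q where q: "q > 0" "det Q = of_real q" using pd_det[OF Q] by blast
  obtain e where e: "e > 0" "det E = of_real e" using pd_det[OF E] by blast
  have "det M * det Q = det E"
    using det_minv[OF invQ] by (simp add: M_def det_mul)
  then have "complex_of_real (prod_list rs * q) = complex_of_real e" using dM q e by simp
  then have pe: "prod_list rs * q = e" by (simp only: of_real_eq_iff)
  have pp: "prod_list rs > 0" using prod_list_pos rs(2) by blast
  have "ln e = ln (prod_list rs) + ln q" using pe pp q ln_mult[of "prod_list rs" q] by simp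
  also have "\<dots> \<le> sum_list rs - length rs + ln q" using ln_prod_list[OF rs(2)] by simp
  finally show ?thesis using e q tM as(1) rs(1) by (simp add: M_def)
qed

lemma F2:
  fixes E0 P :: "complex^'n^'n"
  assumes E0: "pd E0" and P: "psd P"
  shows "Re (det E0) \<le> Re (det (E0 + P))"
proof -
  define N where "N = matrix_inv E0 ** P"
  have inv: "invertible E0" using pd_invertible[OF E0] .
  have eq: "E0 + P = E0 ** (N + mat 1)"
    by (simp add: N_def matrix_add_ldistrib matrix_mul_assoc minv[OF inv])
  obtain as where as0: "length as = CARD('n)" and as1: "\<And>t. det (N + mat t) = prod_list (map (\<lambda>a. a + t) as)"
    and as3: "trace N = sum_list as" and as2: "\<And>a. a \<in> set as \<Longrightarrow> \<exists>x. x \<noteq> 0 \<and> N *v x = a *s x"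
    using SL[of N] by blast
  have "\<exists>r. r \<ge> 0 \<and> a = complex_of_real r" if a: "a \<in> set as" for a
  proof -
    obtain x where x: "x \<noteq> 0" "N *v x = a *s x" using as2[OF a] by blast
    have "P *v x = E0 *v (N *v x)"
      by (simp add: N_def matrix_vector_mul_assoc matrix_mul_assoc minv[OF inv])
    then have eq: "P *v x = a *s (E0 *v x)" using x(2) by (simp add: mulv_scale)
    have q: "Re (ip x (E0 *v x)) > 0" using E0 x(1) by (simp add: pd_def)
    have "a = of_real (Re (ip x (P *v x)) / Re (ip x (E0 *v x)))"
      by (rule ER[OF _ _ x(1) q eq]) (use P E0 in \<open>auto simp: pd_def psd_def\<close>)
    moreover have "Re (ip x (P *v x)) \<ge> 0" using P by (simp add: psd_def)
    ultimately show ?thesis using q by (intro exI[of _ "Re (ip x (P *v x)) / Re (ip x (E0 *v x))"]) auto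
  qed
  then obtain rs where rs: "as = map of_real rs" "\<forall>r\<in>set rs. r \<ge> 0" using real_list by metis
  have "det (N + mat 1) = of_real (prod_list (map (\<lambda>r. r + 1) rs))"
    using as1[of 1] rs(1) by (simp add: o_def prod_list_of_real[symmetric])
  moreover obtain d where d: "d > 0" "det E0 = of_real d" using pd_det[OF E0] by blast
  ultimately have "det (E0 + P) = of_real (d * prod_list (map (\<lambda>r. r + 1) rs))"
    by (simp add: eq det_mul)
  then have "Re (det (E0 + P)) = d * prod_list (map (\<lambda>r. r + 1) rs)" by simp
  moreover have "d \<le> d * prod_list (map (\<lambda>r. r + 1) rs)"
    using prod_list_ge1[OF rs(2)] d(1) by simp
  ultimately show ?thesis using d by simp
qed



definition dmat :: "(real \<Rightarrow> complex^'c^'r) \<Rightarrow> real \<Rightarrow> bool" where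
  "dmat F t0 \<longleftrightarrow> (\<forall>i j. (\<lambda>t. F t $ i $ j) differentiable (at t0))"

lemma dmat_const: "dmat (\<lambda>t. A) t0"
  by (simp add: dmat_def)

lemma dmat_add: "dmat F t0 \<Longrightarrow> dmat G t0 \<Longrightarrow> dmat (\<lambda>t. F t + G t) t0"
  by (simp add: dmat_def differentiable_add)

lemma dmat_diff: "dmat F t0 \<Longrightarrow> dmat G t0 \<Longrightarrow> dmat (\<lambda>t. F t - G t) t0"
  by (simp add: dmat_def differentiable_diff)

lemma dmat_mult: "dmat F t0 \<Longrightarrow> dmat G t0 \<Longrightarrow> dmat (\<lambda>t. F t ** G t) t0"
  unfolding dmat_def matrix_matrix_mult_def
  by (auto intro!: differentiable_sum differentiable_mult)

lemma differentiable_cnj: "f differentiable F \<Longrightarrow> (\<lambda>t. cnj (f t)) differentiable F"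
  unfolding differentiable_def using has_derivative_cnj by blast

lemma dmat_cH: "dmat F t0 \<Longrightarrow> dmat (\<lambda>t. cH (F t)) t0"
  by (simp add: dmat_def differentiable_cnj)

lemma dmat_line: "dmat (\<lambda>t. A + t *\<^sub>R B) t0"
proof -
  have e: "(\<lambda>t. (A + t *\<^sub>R B) $ i $ j) = (\<lambda>t. A$i$j + of_real t * B$i$j)" for i j
  proof (rule ext)
    fix t
    have "(A + t *\<^sub>R B) $ i $ j = A$i$j + t *\<^sub>R (B$i$j)" by simp
    also have "\<dots> = A$i$j + of_real t * B$i$j" by (simp add: scaleR_conv_of_real)
    finally show "(A + t *\<^sub>R B) $ i $ j = A$i$j + of_real t * B$i$j" .
  qed
  have "(\<lambda>t. A$i$j + of_real t * (B $ i $ j)) differentiable (at t0)" for i j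
    by (intro differentiable_add differentiable_mult differentiable_const) (simp add: of_real_differentiable)
  then show ?thesis unfolding dmat_def e by blast
qed

lemma dmat_mat: "dmat (\<lambda>t. mat (of_real t) :: complex^'n^'n) t0"
proof -
  have "(\<lambda>t. if i = j then complex_of_real t else 0) differentiable (at t0)" for i j :: 'n
    by (cases "i = j") (simp_all add: of_real_differentiable)
  then show ?thesis unfolding dmat_def mat_def by simp
qed

lemma dmat_sum: "finite S \<Longrightarrow> (\<And>g. g \<in> S \<Longrightarrow> dmat (F g) t0) \<Longrightarrow> dmat (\<lambda>t. \<Sum>g\<in>S. F g t) t0"
  unfolding dmat_def by (auto simp: sum_component intro!: differentiable_sum)

lemma differentiable_prod':
  fixes f :: "'i \<Rightarrow> real \<Rightarrow> complex"
  shows "finite S \<Longrightarrow> (\<And>i. i \<in> S \<Longrightarrow> f i differentiable (at t0)) \<Longrightarrow> (\<lambda>x. \<Prod>i\<in>S. f i x) differentiable (at t0)"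
  by (induction S rule: finite_induct) (auto intro!: differentiable_mult)

lemma det_differentiable:
  assumes "dmat F t0" shows "(\<lambda>t. det (F t)) differentiable (at t0)"
proof -
  have "(\<lambda>t. (\<Prod>i\<in>UNIV. F t $ i $ p i)) differentiable (at t0)" for p
    using assms unfolding dmat_def by (intro differentiable_prod') auto
  then show ?thesis unfolding det_def
    by (auto intro!: differentiable_sum differentiable_mult)
qed

lemma sylv_inv:
  fixes A B :: "complex^'n^'n"
  assumes inv: "invertible A"
  shows "det (mat 1 + A ** B) = det (mat 1 + B ** A)"
proof -
  have "A ** (mat 1 + B ** A) ** matrix_inv A = mat 1 + A ** B"
    by (simp add: matrix_add_ldistrib matrix_add_rdistrib' matrix_mul_assoc[symmetric] minv[OF inv])
  then have "det (mat 1 + A ** B) = det A * det (mat 1 + B ** A) * det (matrix_inv A)"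
    by (metis det_mul)
  also have "\<dots> = det (mat 1 + B ** A)" using det_minv[OF inv] by (simp add: mult_ac)
  finally show ?thesis .
qed

lemma sylvester:
  fixes A B :: "complex^'n^'n"
  shows "det (mat 1 + A ** B) = det (mat 1 + B ** A)"
proof -
  obtain as where as1: "\<And>t. det (A + mat t) = prod_list (map (\<lambda>a. a + t) as)"
    using SL[of A] by blast
  define f where "f = (\<lambda>t::real. det (mat 1 + (A + mat (of_real t)) ** B) - det (mat 1 + B ** (A + mat (of_real t))))"
  define Z where "Z = {t::real. \<exists>a\<in>set as. a + of_real t = 0}"
  have "Z \<subseteq> (\<lambda>a. - Re a) ` set as"
  proof
    fix t assume "t \<in> Z"
    then obtain a where "a \<in> set as" "a + of_real t = 0" unfolding Z_def by blast
    then have "t = - Re a" "a \<in> set as" by (auto simp: complex_eq_iff)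
    then show "t \<in> (\<lambda>a. - Re a) ` set as" by blast
  qed
  then have finZ: "finite Z" by (rule finite_subset) simp
  have f0: "f t = 0" if "t \<notin> Z" for t
  proof -
    have "det (A + mat (of_real t)) \<noteq> 0" using that unfolding as1 Z_def
      by (auto simp: prod_list_zero_iff)
    then have "invertible (A + mat (of_real t))" by (simp add: invertible_det_nz)
    then show ?thesis unfolding f_def using sylv_inv by simp
  qed
  have ev: "eventually (\<lambda>t. t \<notin> Z) (at (0::real))"
    using islimpt_finite[OF finZ] islimpt_iff_eventually by blast
  have "dmat (\<lambda>t. mat 1 + (A + mat (of_real t)) ** B) 0"
    by (intro dmat_add dmat_mult dmat_const dmat_mat)
  moreover have "dmat (\<lambda>t. mat 1 + B ** (A + mat (of_real t))) 0"
    by (intro dmat_add dmat_mult dmat_const dmat_mat)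
  ultimately have "f differentiable (at 0)"
    unfolding f_def by (intro differentiable_diff det_differentiable)
  then have "isCont f 0" by (rule differentiable_imp_continuous_within)
  then have "(f \<longlongrightarrow> f 0) (at 0)" by (simp add: isCont_def)
  moreover have "eventually (\<lambda>t. f t = 0) (at 0)" using ev by eventually_elim (rule f0)
  ultimately have "((\<lambda>t. 0) \<longlongrightarrow> f 0) (at (0::real))" by (rule Lim_transform_eventually)
  then have "f 0 = 0" using LIM_const_eq by metis
  then show ?thesis unfolding f_def by simp
qed



definition Cm :: "complex^'m^'n \<Rightarrow> real \<Rightarrow> ('g::finite \<Rightarrow> complex^'n^'m) \<Rightarrow> complex^'n^'n" where
  "Cm H s V = (\<Sum>g\<in>UNIV. H ** V g ** cH (V g) ** cH H) + s *\<^sub>R mat 1"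

definition Em :: "complex^'m^'n \<Rightarrow> real \<Rightarrow> complex^'n^'n \<Rightarrow> ('g::finite \<Rightarrow> complex^'n^'m) \<Rightarrow> 'g \<Rightarrow> complex^'n^'n" where
  "Em H s U V gk = mat 1 - cH U ** (H ** V gk) - cH (H ** V gk) ** U + cH U ** Cm H s V ** U"

lemma I1:
  fixes H :: "complex^'m^'n" and U W :: "complex^'n^'n" and V :: "'g::finite \<Rightarrow> complex^'n^'m"
  assumes hW: "herm W"
  shows "(\<Sum>g\<in>UNIV. Re (trace (cH (V g) ** (cH H ** U ** W ** cH U ** H) ** V g)))
     + 2 * Re (trace (- (W ** cH U ** H) ** V gk))
     + Re (trace (W ** (mat 1 + s *\<^sub>R (cH U ** U))))
   = Re (trace (W ** Em H s U V gk))"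
proof -
  define X where "X = H ** V gk"
  define f where "f = (\<lambda>g. H ** V g ** cH (V g) ** cH H)"
  have s3: "Re (trace (cH (V g) ** (cH H ** U ** W ** cH U ** H) ** V g))
      = Re (trace (W ** (cH U ** f g ** U)))" for g
  proof -
    have "trace ((W ** cH U ** H ** V g) ** (cH (V g) ** cH H ** U))
        = trace ((cH (V g) ** cH H ** U) ** (W ** cH U ** H ** V g))" by (rule trace_mul_sym)
    then show ?thesis by (simp add: matrix_mul_assoc f_def)
  qed
  have s4: "Re (trace (W ** (cH X ** U))) = Re (trace (W ** (cH U ** X)))"
  proof -
    have cW: "cH W = W" using hW by (simp add: herm_def)
    have "trace (W ** (cH X ** U)) = trace ((cH X ** U) ** W)" by (rule trace_mul_sym)
    also have "(cH X ** U) ** W = cH (W ** (cH U ** X))" by (simp add: cH_mult matrix_mul_assoc cW)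
    finally show ?thesis by (simp add: trace_cH)
  qed
  have s5: "trace (- (W ** cH U ** H) ** V gk) = - trace (W ** (cH U ** X))"
    by (simp add: matrix_neg_left trace_minus X_def matrix_mul_assoc)
  have s6: "trace (W ** (mat 1 + s *\<^sub>R (cH U ** U))) = trace W + s *\<^sub>R trace (W ** (cH U ** U))"
    by (simp add: matrix_add_ldistrib matrix_scaleR_right trace_add trace_scaleR)
  have s2: "trace (W ** (cH U ** Cm H s V ** U))
      = (\<Sum>g\<in>UNIV. trace (W ** (cH U ** f g ** U))) + s *\<^sub>R trace (W ** (cH U ** U))"
  proof -
    have "cH U ** Cm H s V ** U = (\<Sum>g\<in>UNIV. cH U ** f g ** U) + s *\<^sub>R (cH U ** U)"
      unfolding Cm_def f_def[symmetric]
      by (simp add: matrix_add_ldistrib matrix_add_rdistrib' matrix_sum_right matrix_sum_left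
          mat1_scaleR_right matrix_scaleR_left)
    then have "W ** (cH U ** Cm H s V ** U) = (\<Sum>g\<in>UNIV. W ** (cH U ** f g ** U)) + s *\<^sub>R (W ** (cH U ** U))"
      by (simp add: matrix_add_ldistrib matrix_sum_right matrix_scaleR_right)
    then show ?thesis by (simp add: trace_add trace_sum trace_scaleR)
  qed
  have main: "trace (W ** Em H s U V gk) = trace W - trace (W ** (cH U ** X)) - trace (W ** (cH X ** U))
      + trace (W ** (cH U ** Cm H s V ** U))"
    unfolding Em_def X_def[symmetric]
    by (simp add: matrix_add_ldistrib matrix_diff_ldistrib trace_add trace_sub)
  show ?thesis
    unfolding main s2 s5 s6
    using s3 s4 by (simp add: Re_sum)
qed

lemma minv_cancel:
  assumes "invertible (C::complex^'n^'n)"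
  shows "A ** C ** matrix_inv C = A" "A ** matrix_inv C ** C = A"
    "C ** matrix_inv C = mat 1" "matrix_inv C ** C = mat 1"
  using minv[OF assms] by (simp_all add: matrix_mul_assoc[symmetric])

lemma complete_square:
  fixes C U X :: "complex^'n^'n"
  assumes hC: "herm C" and inv: "invertible C"
  shows "mat 1 - cH U ** X - cH X ** U + cH U ** C ** U
    = (mat 1 - cH X ** matrix_inv C ** X) + cH (U - matrix_inv C ** X) ** C ** (U - matrix_inv C ** X)"
proof -
  have cCi: "cH (matrix_inv C) = matrix_inv C" using herm_minv[OF hC inv] by (simp add: herm_def)
  have "cH (U - matrix_inv C ** X) = cH U - cH X ** matrix_inv C"
    by (simp add: cH_diff cH_mult cCi)
  then have "cH (U - matrix_inv C ** X) ** C ** (U - matrix_inv C ** X)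
      = cH U ** C ** U - cH U ** X - cH X ** U + cH X ** matrix_inv C ** X"
    by (simp add: matrix_diff_ldistrib matrix_diff_rdistrib matrix_mul_assoc minv_cancel[OF inv])
  then show ?thesis by (simp add: algebra_simps)
qed

lemma psd_congr: assumes "psd C" shows "psd (cH Y ** C ** Y)"
proof -
  have "ip x ((cH Y ** C ** Y) *v x) = ip (Y *v x) (C *v (Y *v x))" for x
    by (simp add: matrix_vector_mul_assoc[symmetric] ip_adj)
  moreover have "cH (cH Y ** C ** Y) = cH Y ** C ** Y"
    using assms by (simp add: psd_def herm_def cH_mult matrix_mul_assoc)
  ultimately show ?thesis using assms unfolding psd_def herm_def by simp
qed

lemma pd_E0:
  fixes R X :: "complex^'n^'n"
  assumes R: "pd R"
  defines "C \<equiv> R + X ** cH X"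
  shows "pd (mat 1 - cH X ** matrix_inv C ** X)"
proof -
  have C: "pd C" unfolding C_def using pd_add_psd[OF R psd_gram] .
  have inv: "invertible C" using pd_invertible[OF C] .
  have hC: "herm C" using C by (simp add: pd_def)
  have cC: "cH C = C" using hC by (simp add: herm_def)
  have cCi: "cH (matrix_inv C) = matrix_inv C" using herm_minv[OF hC inv] by (simp add: herm_def)
  have herm: "herm (mat 1 - cH X ** matrix_inv C ** X)"
    by (simp add: herm_def cH_diff cH_mult cCi matrix_mul_assoc)
  have pos: "Re (ip x ((mat 1 - cH X ** matrix_inv C ** X) *v x)) > 0" if x: "x \<noteq> 0" for x
  proof -
    define y where "y = matrix_inv C *v (X *v x)"
    define w where "w = cH X *v y"
    have Cy: "C *v y = X *v x" unfolding y_def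
      by (simp add: matrix_vector_mul_assoc matrix_mul_assoc minv_cancel[OF inv])
    have e1: "ip x ((mat 1 - cH X ** matrix_inv C ** X) *v x) = ip x x - ip x w"
    proof -
      have "(cH X ** matrix_inv C ** X) *v x = w"
        unfolding w_def y_def by (simp add: matrix_vector_mul_assoc matrix_mul_assoc)
      then show ?thesis by (simp add: mulv_diff_left ip_diff2)
    qed
    have e2: "ip x w = ip (X *v x) y" unfolding w_def using ip_adj[of x "cH X" y] by simp
    have e3: "ip (X *v x) y = ip y (C *v y)" using ip_adj[of y C y] cC Cy by simp
    have e4: "ip y (C *v y) = ip y (R *v y) + ip w w"
      unfolding C_def w_def by (simp add: mulv_add_left ip_add2 matrix_vector_mul_assoc[symmetric] ip_adj)
    have hRC: "ip y (C *v y) = of_real (Re (ip y (C *v y)))" by (rule herm_ip_real[OF hC])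
    define a where "a = Re (ip y (C *v y))"
    define \<rho> where "\<rho> = Re (ip y (R *v y))"
    define b where "b = Re (ip w w)"
    have ab: "a = \<rho> + b" unfolding a_def \<rho>_def b_def using e4 by simp
    have xw: "ip x w = of_real a" using e2 e3 hRC a_def by simp
    have wx: "ip w x = of_real a" using xw ip_swap[of w x] by simp
    have "0 \<le> Re (ip (x - w) (x - w))" by (rule ip_self_nonneg)
    also have "ip (x - w) (x - w) = ip x x - ip x w - ip w x + ip w w"
      by (simp add: ip_diff1 ip_diff2)
    finally have ineq: "0 \<le> Re (ip x x) - 2 * a + b" using xw wx b_def by simp
    show ?thesis
    proof (cases "y = 0")
      case True
      then have "a = 0" unfolding a_def by simp
      then show ?thesis using e1 xw ip_self_pos[OF x] by simp
    next
      case False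
      then have "\<rho> > 0" using R unfolding \<rho>_def pd_def by auto
      then show ?thesis using e1 xw ineq ab by simp
    qed
  qed
  show ?thesis using herm pos by (simp add: pd_def)
qed



definition Rm :: "complex^'m^'n \<Rightarrow> real \<Rightarrow> 'g::finite \<Rightarrow> ('g \<Rightarrow> complex^'n^'m) \<Rightarrow> complex^'n^'n" where
  "Rm H s gk V = (\<Sum>g\<in>{g. g \<noteq> gk}. H ** V g ** cH (V g) ** cH H) + s *\<^sub>R mat 1"

definition E0m :: "complex^'m^'n \<Rightarrow> real \<Rightarrow> 'g::finite \<Rightarrow> ('g \<Rightarrow> complex^'n^'m) \<Rightarrow> complex^'n^'n" where
  "E0m H s gk V = mat 1 - cH (H ** V gk) ** matrix_inv (Cm H s V) ** (H ** V gk)"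

lemma term_gram: "H ** V ** cH V ** cH H = (H ** V) ** cH (H ** (V::complex^'n^'m))"
  by (simp add: cH_mult matrix_mul_assoc)

lemma Cm_split: "Cm H s V = Rm H s gk V + (H ** V gk) ** cH (H ** V gk)"
proof -
  have "(\<Sum>g\<in>UNIV. H ** V g ** cH (V g) ** cH H)
      = H ** V gk ** cH (V gk) ** cH H + (\<Sum>g\<in>UNIV - {gk}. H ** V g ** cH (V g) ** cH H)"
    by (rule sum.remove) auto
  moreover have "UNIV - {gk} = {g. g \<noteq> gk}" by auto
  ultimately show ?thesis unfolding Cm_def Rm_def term_gram by (simp add: algebra_simps)
qed

lemma pd_Rm: "s > 0 \<Longrightarrow> pd (Rm H s gk V)"
  unfolding Rm_def by (intro psd_add_pd psd_sum pd_scaled_id) (auto simp: term_gram psd_gram)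

lemma pd_Cm: "s > 0 \<Longrightarrow> pd (Cm H s V)"
  unfolding Cm_def by (intro psd_add_pd psd_sum pd_scaled_id) (auto simp: term_gram psd_gram)

lemma pos_det: assumes "pd A" shows "Re (det A) > 0" "det A = of_real (Re (det A))"
  using pd_det[OF assms] by auto

lemma negrate_eq:
  assumes s: "s > 0"
  shows "negrate H s gk V = ln (Re (det (Rm H s gk V))) - ln (Re (det (Cm H s V)))"
proof -
  define R where "R = Rm H s gk V"
  define C where "C = Cm H s V"
  define X where "X = H ** V gk"
  have R: "pd R" unfolding R_def using pd_Rm[OF s] .
  have C: "pd C" unfolding C_def using pd_Cm[OF s] .
  have invR: "invertible R" using pd_invertible[OF R] .
  have J: "Jmat H s gk V = matrix_inv R" unfolding Jmat_def R_def Rm_def ..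
  have CRX: "C = R + X ** cH X" unfolding C_def R_def X_def by (rule Cm_split)
  have "mat 1 + H ** V gk ** cH (V gk) ** cH H ** Jmat H s gk V = C ** matrix_inv R"
    unfolding J CRX
    by (simp add: X_def cH_mult matrix_mul_assoc matrix_add_rdistrib' minv_cancel[OF invR])
  then have d1: "det (mat 1 + H ** V gk ** cH (V gk) ** cH H ** Jmat H s gk V) = det C * det (matrix_inv R)"
    by (simp add: det_mul)
  obtain c where c: "c > 0" "det C = of_real c" using pd_det[OF C] by blast
  obtain r where r: "r > 0" "det R = of_real r" using pd_det[OF R] by blast
  have "det (matrix_inv R) * det R = 1" by (rule det_minv[OF invR])
  then have "det (matrix_inv R) = 1 / det R" using r by (simp add: field_simps)
  then have "det (mat 1 + H ** V gk ** cH (V gk) ** cH H ** Jmat H s gk V) = of_real (c / r)"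
    using d1 c r by simp
  then show ?thesis unfolding negrate_def using c r
    by (simp add: ln_div R_def[symmetric] C_def[symmetric])
qed

lemma pd_E0m: "s > 0 \<Longrightarrow> pd (E0m H s gk V)"
  unfolding E0m_def Cm_split[of H s V gk] by (rule pd_E0[OF pd_Rm])

lemma E0m_eq:
  assumes s: "s > 0"
  shows "ln (Re (det (E0m H s gk V))) = negrate H s gk V"
proof -
  define R where "R = Rm H s gk V"
  define C where "C = Cm H s V"
  define X where "X = H ** V gk"
  have R: "pd R" unfolding R_def using pd_Rm[OF s] .
  have C: "pd C" unfolding C_def using pd_Cm[OF s] .
  have invC: "invertible C" using pd_invertible[OF C] .
  have CRX: "C = R + X ** cH X" unfolding C_def R_def X_def by (rule Cm_split)
  have e1: "E0m H s gk V = mat 1 + (- cH X) ** (matrix_inv C ** X)"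
    unfolding E0m_def C_def[symmetric] X_def[symmetric] by (simp add: matrix_neg_left matrix_mul_assoc)
  have e2: "mat 1 + (matrix_inv C ** X) ** (- cH X) = matrix_inv C ** R"
  proof -
    have "matrix_inv C ** R = matrix_inv C ** (C - X ** cH X)" using CRX by simp
    also have "\<dots> = mat 1 - matrix_inv C ** X ** cH X"
      by (simp add: matrix_diff_ldistrib minv_cancel[OF invC] matrix_mul_assoc)
    finally show ?thesis by (simp add: matrix_neg_right)
  qed
  have d0: "det (E0m H s gk V) = det (matrix_inv C) * det R"
    unfolding e1 sylvester[of "- cH X"] e2 by (simp add: det_mul)
  obtain c where c: "c > 0" "det C = of_real c" using pd_det[OF C] by blast
  obtain r where r: "r > 0" "det R = of_real r" using pd_det[OF R] by blast
  moreover have "det (matrix_inv C) * det C = 1" by (rule det_minv[OF invC])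
  then have "det (matrix_inv C) = 1 / det C" using c by (simp add: field_simps)
  ultimately have "det (E0m H s gk V) = of_real (r / c)" using c r d0 by simp
  then show ?thesis using negrate_eq[OF s, of H gk V] c r
    by (simp add: ln_div R_def[symmetric] C_def[symmetric])
qed



lemma U_eq: "Uhat H s gk Vi = matrix_inv (Cm H s Vi) ** (H ** Vi gk)"
  unfolding Uhat_def Cm_def ..

lemma Q_eq:
  assumes s: "s > 0"
  shows "Qhat H s gk Vi = E0m H s gk Vi"
proof -
  have C: "pd (Cm H s Vi)" using pd_Cm[OF s] .
  have cCi: "cH (matrix_inv (Cm H s Vi)) = matrix_inv (Cm H s Vi)"
    using herm_minv[of "Cm H s Vi"] C pd_invertible[OF C] by (simp add: pd_def herm_def)
  show ?thesis unfolding Qhat_def E0m_def U_eq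
    by (simp add: cH_mult cCi matrix_mul_assoc)
qed

lemma pd_Q: "s > 0 \<Longrightarrow> pd (Qhat H s gk Vi)"
  using Q_eq pd_E0m by metis

lemma hsur_eq:
  fixes H :: "complex^'m::finite^'n::finite"
  assumes s: "s > 0"
  shows "hsur H s gk Vi V = Re (trace (matrix_inv (Qhat H s gk Vi) ** Em H s (Uhat H s gk Vi) V gk))
     + ln (Re (det (Qhat H s gk Vi))) - real CARD('n)"
proof -
  have hW: "herm (matrix_inv (Qhat H s gk Vi))" using pd_inv[OF pd_Q[OF s, of H gk Vi]] by (simp add: pd_def)
  note I = I1[OF hW, of V H "Uhat H s gk Vi" gk s]
  show ?thesis using I unfolding hsur_def Ahat_def Bhat_def bhat_def by simp
qed

lemma Em_split:
  assumes s: "s > 0"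
  shows "Em H s U V gk = E0m H s gk V
    + cH (U - matrix_inv (Cm H s V) ** (H ** V gk)) ** Cm H s V ** (U - matrix_inv (Cm H s V) ** (H ** V gk))"
proof -
  have C: "pd (Cm H s V)" using pd_Cm[OF s] .
  show ?thesis unfolding Em_def E0m_def
    by (rule complete_square) (use C pd_invertible[OF C] in \<open>auto simp: pd_def\<close>)
qed

lemma Ca:
  assumes s: "s > 0"
  shows "negrate H s gk V \<le> hsur H s gk Vi V"
proof -
  define U where "U = Uhat H s gk Vi"
  define Q where "Q = Qhat H s gk Vi"
  define E where "E = Em H s U V gk"
  define P where "P = cH (U - matrix_inv (Cm H s V) ** (H ** V gk)) ** Cm H s V ** (U - matrix_inv (Cm H s V) ** (H ** V gk))"
  have Q: "pd Q" unfolding Q_def using pd_Q[OF s, of H gk Vi] .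
  have E0: "pd (E0m H s gk V)" using pd_E0m[OF s] .
  have P: "psd P" unfolding P_def by (rule psd_congr[OF pd_psd[OF pd_Cm[OF s]]])
  have EE: "E = E0m H s gk V + P" unfolding E_def P_def by (rule Em_split[OF s])
  have E: "pd E" unfolding EE using pd_add_psd[OF E0 P] .
  have "ln (Re (det E)) \<le> hsur H s gk Vi V"
    using F1[OF Q E] hsur_eq[OF s, of H gk Vi V] unfolding E_def Q_def U_def by simp
  moreover have "ln (Re (det (E0m H s gk V))) \<le> ln (Re (det E))"
    using F2[OF E0 P] pos_det(1)[OF E0] EE by simp
  ultimately show ?thesis using E0m_eq[OF s, of H gk V] by simp
qed

lemma Ceq:
  fixes H :: "complex^'m::finite^'n::finite"
  assumes s: "s > 0"
  shows "hsur H s gk Vi Vi = negrate H s gk Vi"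
proof -
  define Q where "Q = Qhat H s gk Vi"
  have Q: "pd Q" unfolding Q_def using pd_Q[OF s, of H gk Vi] .
  have "Em H s (Uhat H s gk Vi) Vi gk = E0m H s gk Vi"
    using Em_split[OF s, of H "Uhat H s gk Vi" Vi gk] by (simp add: U_eq)
  then have "Em H s (Uhat H s gk Vi) Vi gk = Q" using Q_eq[OF s, of H gk Vi] Q_def by simp
  then have "hsur H s gk Vi Vi = Re (trace (matrix_inv Q ** Q)) + ln (Re (det Q)) - real CARD('n)"
    using hsur_eq[OF s, of H gk Vi Vi] Q_def by simp
  also have "matrix_inv Q ** Q = mat 1" using minv(2)[OF pd_invertible[OF Q]] .
  finally have "hsur H s gk Vi Vi = ln (Re (det Q))" by (simp add: trace_I)
  then show ?thesis using E0m_eq[OF s, of H gk Vi] Q_eq[OF s, of H gk Vi] Q_def by simp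
qed



lemma diag_quad: "(cH Y ** A ** Y) $ j $ j = ip (column j Y) (A *v column j (Y::complex^'n^'m))"
proof -
  have "(cH Y ** A ** Y) $ j $ j = (\<Sum>k\<in>UNIV. \<Sum>i\<in>UNIV. cnj (Y$i$j) * A$i$k * Y$k$j)"
    by (simp add: matrix_matrix_mult_def sum_distrib_right)
  also have "\<dots> = (\<Sum>i\<in>UNIV. \<Sum>k\<in>UNIV. cnj (Y$i$j) * A$i$k * Y$k$j)" by (rule sum.swap)
  also have "\<dots> = ip (column j Y) (A *v column j Y)"
    by (simp add: ip_def matrix_vector_mult_def column_def sum_distrib_left mult.assoc)
  finally show ?thesis .
qed

lemma trace_psd_nonneg: "psd A \<Longrightarrow> 0 \<le> Re (trace (cH Y ** A ** (Y::complex^'n^'m)))"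
  unfolding trace_def diag_quad by (auto simp: Re_sum psd_def intro!: sum_nonneg)

lemma A_psd:
  assumes s: "s > 0" shows "psd (Ahat H s gk Vi)"
proof -
  have "Ahat H s gk Vi = cH (cH (Uhat H s gk Vi) ** H) ** matrix_inv (Qhat H s gk Vi) ** (cH (Uhat H s gk Vi) ** H)"
    unfolding Ahat_def by (simp add: cH_mult matrix_mul_assoc)
  then show ?thesis using psd_congr[OF pd_psd[OF pd_inv[OF pd_Q[OF s, of H gk Vi]]]] by simp
qed

lemma quad_term:
  fixes P Q :: "complex^'n^'m" and A :: "complex^'m^'m"
  shows "Re (trace (cH (P + t *\<^sub>R Q) ** A ** (P + t *\<^sub>R Q)))
    = Re (trace (cH P ** A ** P)) + t * (Re (trace (cH Q ** A ** P)) + Re (trace (cH P ** A ** Q)))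
      + t\<^sup>2 * Re (trace (cH Q ** A ** Q))"
proof -
  have "cH (P + t *\<^sub>R Q) ** A ** (P + t *\<^sub>R Q)
     = cH P ** A ** P + t *\<^sub>R (cH Q ** A ** P + cH P ** A ** Q) + (t * t) *\<^sub>R (cH Q ** A ** Q)"
    by (simp add: cH_add cH_scaleR matrix_add_ldistrib matrix_add_rdistrib' matrix_scaleR_left
        matrix_scaleR_right scaleR_add_right)
  then show ?thesis by (simp add: trace_add trace_scaleR power2_eq_square algebra_simps)
qed

lemma lin_term:
  fixes B :: "complex^'m^'n" and P Q :: "complex^'n^'m"
  shows "Re (trace (B ** (P + t *\<^sub>R Q))) = Re (trace (B ** P)) + t * Re (trace (B ** Q))"
  by (simp add: matrix_add_ldistrib matrix_scaleR_right trace_add trace_scaleR)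

lemma quad:
  "hsur H s gk Vi (\<lambda>g. V g + t *\<^sub>R W g)
   = (\<Sum>g\<in>UNIV. Re (trace (cH (W g) ** Ahat H s gk Vi ** W g))) * t\<^sup>2
   + ((\<Sum>g\<in>UNIV. Re (trace (cH (W g) ** Ahat H s gk Vi ** V g)) + Re (trace (cH (V g) ** Ahat H s gk Vi ** W g)))
      + 2 * Re (trace (Bhat H s gk Vi ** W gk))) * t
   + hsur H s gk Vi V"
  unfolding hsur_def
  apply (simp only: quad_term)
  apply (simp only: lin_term)
  by (simp add: sum.distrib sum_distrib_left sum_distrib_right algebra_simps)

lemma quad_ex:
  assumes s: "s > 0"
  shows "\<exists>a b c. a \<ge> 0 \<and> (\<forall>t::real. hsur H s gk Vi (\<lambda>g. V g + t *\<^sub>R W g) = a * t\<^sup>2 + b * t + c)"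
proof -
  have "0 \<le> (\<Sum>g\<in>UNIV. Re (trace (cH (W g) ** Ahat H s gk Vi ** W g)))"
    by (intro sum_nonneg trace_psd_nonneg A_psd[OF s])
  then show ?thesis using quad[of H s gk Vi V _ W] by blast
qed

lemma convex:
  assumes s: "s > 0" and t: "0 \<le> t" "t \<le> 1"
  shows "hsur H s gk Vi (\<lambda>g. (1 - t) *\<^sub>R V g + t *\<^sub>R W g)
         \<le> (1 - t) * hsur H s gk Vi V + t * hsur H s gk Vi W"
proof -
  obtain a b c where abc: "a \<ge> 0" "\<And>t::real. hsur H s gk Vi (\<lambda>g. V g + t *\<^sub>R (W g - V g)) = a * t\<^sup>2 + b * t + c"
    using quad_ex[OF s, of H gk Vi V "\<lambda>g. W g - V g"] by blast
  have l: "(\<lambda>g. (1 - t) *\<^sub>R V g + t *\<^sub>R W g) = (\<lambda>g. V g + t *\<^sub>R (W g - V g))"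
    by (rule ext) (simp add: algebra_simps)
  have h0: "hsur H s gk Vi V = c" using abc(2)[of 0] by simp
  have h1: "hsur H s gk Vi W = a + b + c" using abc(2)[of 1] by simp
  have "0 \<le> a * (t * (1 - t))" using abc(1) t by simp
  then show ?thesis unfolding l abc(2) h0 h1 by (simp add: power2_eq_square algebra_simps)
qed



lemma perturb_line:
  "perturb V g a b (c * complex_of_real t)
   = (\<lambda>g'. V g' + t *\<^sub>R (if g' = g then (\<chi> i j. if i = a \<and> j = b then c else 0) else 0))"
proof (rule ext)
  fix g'
  have "(\<chi> i j. if i = a \<and> j = b then c * complex_of_real t else 0)
      = t *\<^sub>R (\<chi> i j. if i = a \<and> j = b then c else 0)"
  proof -
    have sc: "t *\<^sub>R (z::complex) = z * complex_of_real t" for z by (simp add: scaleR_conv_of_real mult.commute)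
    show ?thesis by (simp add: vec_eq_iff sc)
  qed
  then show "perturb V g a b (c * complex_of_real t) g'
   = V g' + t *\<^sub>R (if g' = g then (\<chi> i j. if i = a \<and> j = b then c else 0) else 0)"
    unfolding perturb_def by auto
qed

lemma ln_det_diff:
  assumes F: "dmat F 0" and P: "pd (F 0)"
  shows "(\<lambda>t. ln (Re (det (F t)))) differentiable (at 0)"
proof -
  have d: "(\<lambda>t. det (F t)) differentiable (at 0)" by (rule det_differentiable[OF F])
  have "Re differentiable (at (det (F 0)))"
    by (rule bounded_linear_imp_differentiable[OF bounded_linear_Re])
  then have r: "(\<lambda>t. Re (det (F t))) differentiable (at 0)"
    using differentiable_compose[of Re "\<lambda>t. det (F t)" 0 UNIV] d by simp
  have "ln differentiable (at (Re (det (F 0))))"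
    using DERIV_ln[OF pos_det(1)[OF P]] real_differentiable_def by blast
  then show ?thesis using differentiable_compose[of ln "\<lambda>t. Re (det (F t))" 0 UNIV] r by simp
qed

lemma negrate_line_diff:
  assumes s: "s > 0"
  shows "(\<lambda>t. negrate H s gk (\<lambda>g. V g + t *\<^sub>R W g)) differentiable (at 0)"
proof -
  have e: "(\<lambda>t. negrate H s gk (\<lambda>g. V g + t *\<^sub>R W g))
     = (\<lambda>t. ln (Re (det (Rm H s gk (\<lambda>g. V g + t *\<^sub>R W g)))) - ln (Re (det (Cm H s (\<lambda>g. V g + t *\<^sub>R W g)))))"
    using negrate_eq[OF s] by blast
  have dR: "dmat (\<lambda>t. Rm H s gk (\<lambda>g. V g + t *\<^sub>R W g)) 0"
    unfolding Rm_def by (intro dmat_add dmat_sum dmat_mult dmat_const dmat_cH dmat_line) auto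
  have dC: "dmat (\<lambda>t. Cm H s (\<lambda>g. V g + t *\<^sub>R W g)) 0"
    unfolding Cm_def by (intro dmat_add dmat_sum dmat_mult dmat_const dmat_cH dmat_line) auto
  show ?thesis unfolding e
    by (intro differentiable_diff ln_det_diff dR dC pd_Rm pd_Cm s)
qed

lemma deriv_line:
  assumes s: "s > 0"
  shows "\<exists>D. ((\<lambda>t. hsur H s gk Vi (\<lambda>g. Vi g + t *\<^sub>R W g)) has_real_derivative D) (at 0)
          \<and> ((\<lambda>t. negrate H s gk (\<lambda>g. Vi g + t *\<^sub>R W g)) has_real_derivative D) (at 0)"
proof -
  define a where "a = (\<Sum>g\<in>UNIV. Re (trace (cH (W g) ** Ahat H s gk Vi ** W g)))"
  define b where "b = (\<Sum>g\<in>UNIV. Re (trace (cH (W g) ** Ahat H s gk Vi ** Vi g)) + Re (trace (cH (Vi g) ** Ahat H s gk Vi ** W g)))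
      + 2 * Re (trace (Bhat H s gk Vi ** W gk))"
  define h where "h = (\<lambda>t. hsur H s gk Vi (\<lambda>g. Vi g + t *\<^sub>R W g))"
  define n where "n = (\<lambda>t. negrate H s gk (\<lambda>g. Vi g + t *\<^sub>R W g))"
  have hq: "h = (\<lambda>t. a * t\<^sup>2 + b * t + hsur H s gk Vi Vi)"
    unfolding h_def a_def b_def using quad[of H s gk Vi Vi] by blast
  have dh: "(h has_real_derivative b) (at 0)"
    unfolding hq by (auto intro!: derivative_eq_intros)
  obtain D' where dn: "(n has_real_derivative D') (at 0)"
    using negrate_line_diff[OF s, of H gk Vi W] unfolding n_def by (auto simp: real_differentiable_def)
  have dphi: "((\<lambda>t. h t - n t) has_real_derivative (b - D')) (at 0)"
    by (rule DERIV_diff[OF dh dn])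
  have "h 0 - n 0 = 0" unfolding h_def n_def using Ceq[OF s, of H gk Vi] by simp
  moreover have "h y - n y \<ge> 0" for y unfolding h_def n_def using Ca[OF s] by simp
  ultimately have "\<forall>y. \<bar>0 - y\<bar> < 1 \<longrightarrow> h 0 - n 0 \<le> h y - n y" by simp
  then have "b - D' = 0" using DERIV_local_min[OF dphi, of 1] by simp
  then show ?thesis using dh dn unfolding h_def n_def by auto
qed

theorem mainTheorem3:
  fixes H :: "'k \<Rightarrow> complex^'m::finite^'n::finite"
    and sigma2 :: "'k \<Rightarrow> real"
    and gsel :: "'k \<Rightarrow> 'g::finite"
    and k :: 'k
    and Vi :: "'g \<Rightarrow> complex^'n^'m"
  assumes MN: "CARD('m) > CARD('n)"
    and sig: "\<forall>k. sigma2 k > 0"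
  shows
    "(\<forall>V. hsur (H k) (sigma2 k) (gsel k) Vi V \<ge> negrate (H k) (sigma2 k) (gsel k) V)
   \<and> hsur (H k) (sigma2 k) (gsel k) Vi Vi = negrate (H k) (sigma2 k) (gsel k) Vi
   \<and> (\<forall>g a b. (\<exists>D. ((\<lambda>t. hsur (H k) (sigma2 k) (gsel k) Vi (perturb Vi g a b (complex_of_real t)))
                        has_real_derivative D) (at 0)
               \<and> ((\<lambda>t. negrate (H k) (sigma2 k) (gsel k) (perturb Vi g a b (complex_of_real t)))
                        has_real_derivative D) (at 0))
           \<and> (\<exists>D. ((\<lambda>t. hsur (H k) (sigma2 k) (gsel k) Vi (perturb Vi g a b (\<i> * complex_of_real t)))
                        has_real_derivative D) (at 0)
               \<and> ((\<lambda>t. negrate (H k) (sigma2 k) (gsel k) (perturb Vi g a b (\<i> * complex_of_real t)))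
                        has_real_derivative D) (at 0)))
   \<and> (\<forall>V W. \<exists>a b c. a \<ge> 0 \<and>
         (\<forall>t::real. hsur (H k) (sigma2 k) (gsel k) Vi (\<lambda>g. V g + t *\<^sub>R W g) = a * t\<^sup>2 + b * t + c))
   \<and> (\<forall>V W (t::real). 0 \<le> t \<longrightarrow> t \<le> 1 \<longrightarrow>
         hsur (H k) (sigma2 k) (gsel k) Vi (\<lambda>g. (1 - t) *\<^sub>R V g + t *\<^sub>R W g)
         \<le> (1 - t) * hsur (H k) (sigma2 k) (gsel k) Vi V + t * hsur (H k) (sigma2 k) (gsel k) Vi W)"
proof -
  have s: "sigma2 k > 0" using sig by blast
  have dir: "\<exists>D. ((\<lambda>t. hsur (H k) (sigma2 k) (gsel k) Vi (perturb Vi g a b (c * complex_of_real t)))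
                        has_real_derivative D) (at 0)
               \<and> ((\<lambda>t. negrate (H k) (sigma2 k) (gsel k) (perturb Vi g a b (c * complex_of_real t)))
                        has_real_derivative D) (at 0)" for g a b c
    unfolding perturb_line by (rule deriv_line[OF s])
  have dir1: "\<exists>D. ((\<lambda>t. hsur (H k) (sigma2 k) (gsel k) Vi (perturb Vi g a b (complex_of_real t)))
                        has_real_derivative D) (at 0)
               \<and> ((\<lambda>t. negrate (H k) (sigma2 k) (gsel k) (perturb Vi g a b (complex_of_real t)))
                        has_real_derivative D) (at 0)" for g a b
    using dir[of g a b 1] by simp
  show ?thesis
  proof (intro conjI allI impI)
    fix V show "negrate (H k) (sigma2 k) (gsel k) V \<le> hsur (H k) (sigma2 k) (gsel k) Vi V"
      by (rule Ca[OF s])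
  next
    show "hsur (H k) (sigma2 k) (gsel k) Vi Vi = negrate (H k) (sigma2 k) (gsel k) Vi"
      by (rule Ceq[OF s])
  next
    fix g a b show "\<exists>D. ((\<lambda>t. hsur (H k) (sigma2 k) (gsel k) Vi (perturb Vi g a b (complex_of_real t)))
                        has_real_derivative D) (at 0)
               \<and> ((\<lambda>t. negrate (H k) (sigma2 k) (gsel k) (perturb Vi g a b (complex_of_real t)))
                        has_real_derivative D) (at 0)" by (rule dir1)
  next
    fix g a b show "\<exists>D. ((\<lambda>t. hsur (H k) (sigma2 k) (gsel k) Vi (perturb Vi g a b (\<i> * complex_of_real t)))
                        has_real_derivative D) (at 0)
               \<and> ((\<lambda>t. negrate (H k) (sigma2 k) (gsel k) (perturb Vi g a b (\<i> * complex_of_real t)))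
                        has_real_derivative D) (at 0)" by (rule dir)
  next
    fix V W show "\<exists>a b c. a \<ge> 0 \<and>
         (\<forall>t::real. hsur (H k) (sigma2 k) (gsel k) Vi (\<lambda>g. V g + t *\<^sub>R W g) = a * t\<^sup>2 + b * t + c)"
      by (rule quad_ex[OF s])
  next
    fix V W and t :: real assume "0 \<le> t" "t \<le> 1"
    then show "hsur (H k) (sigma2 k) (gsel k) Vi (\<lambda>g. (1 - t) *\<^sub>R V g + t *\<^sub>R W g)
         \<le> (1 - t) * hsur (H k) (sigma2 k) (gsel k) Vi V + t * hsur (H k) (sigma2 k) (gsel k) Vi W"
      by (rule convex[OF s])
  qed
qed

end
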